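(* Let $\epsilon\in(0,1)$. Let $x\in\{0,1\}^m$ and $y\in\{0,1\}^k$ be random variables jointly satisfying the $\epsilon$-martingale condition with respect to the ordering $x_1,\dots,x_m,y_1,\dots,y_k$. Let $x'\in\{0,1\}^m$ and $y'\in\{0,1\}^k$ be independent random variables, each with independent coordinates equal to $1$ with probability $(1-\epsilon)/2$. Then \[ \Pr[\mu_x(y)\ge0]\le\Pr[\mu_{x'}(y')\ge0]\le\exp\bigl(-\epsilon^3(1-O(\epsilon))k/2\bigr). \]
   Context: Characteristic strings and forks. A characteristic string is $w=w_1\dots w_n\in\{0,1\}^n$; index $i$ is honest if $w_i=0$ and adversarial if $w_i=1$. A fork for $w$ is a rooted tree with edges directed away from the root $r$ and labeling $\ell:V\to\{0,\dots,n\}$ with (F1) $\ell(r)=0$; (F2) labels strictly increasing along directed paths; (F3) each honest index labels exactly one vertex; (F4) for honest $i<j$ the vertex labeled $i$ has strictly smaller depth than the vertex labeled $j$. Write $F\vdash w$. A vertex is honest if it is the root or labeled by an honest index. A tine is a directed path from the root; its length is its number of edges, $\ell(t)$ the label of its last vertex. A fork is closed if every leaf is honest; a closed fork has a unique longest tine $\hat t$. For closed $F\vdash w$ and tine $t$: $\mathrm{gap}(t)=\mathrm{length}(\hat t)-\mathrm{length}(t)$, $\mathrm{reserve}(t)=|\{i:w_i=1,\ i>\ell(t)\}|$, $\mathrm{reach}(t)=\mathrm{reserve}(t)-\mathrm{gap}(t)$. For $w=xy$, tines are disjoint over $y$ if they share no edge terminating at a vertex with label $>|x|$ (a tine may be paired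 with itself). $\mu_x(F)=\max\min\{\mathrm{reach}(t_1),\mathrm{reach}(t_2)\}$ over pairs disjoint over $y$, and $\mu_x(y)=\max\{\mu_x(F):F\vdash xy\text{ closed}\}$. A sequence of $\{0,1\}$-valued random variables $Z_1,\dots,Z_N$ satisfies the $\epsilon$-martingale condition if for every $t$, $\Pr[Z_t=1\mid Z_1,\dots,Z_{t-1}]\le(1-\epsilon)/2$ for arbitrary conditioning values. *)

theory Defs
  imports "HOL-Probability.Probability" "HOL-Library.Sublist"
begin

text \<open>Characteristic strings are bool lists; True = 1 (adversarial), False = 0 (honest).
  Index i (1-based, 1 <= i <= length w) corresponds to w ! (i - 1).\<close>

definition honest_idx :: "bool list \<Rightarrow> nat \<Rightarrow> bool" where
  "honest_idx w i \<longleftrightarrow> 1 \<le> i \<and> i \<le> length w \<and> \<not> w ! (i - 1)"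

definition adv_idx :: "bool list \<Rightarrow> nat \<Rightarrow> bool" where
  "adv_idx w i \<longleftrightarrow> 1 \<le> i \<and> i \<le> length w \<and> w ! (i - 1)"

text \<open>A rooted tree is represented as a finite prefix-closed set of lists.
  A vertex is the list of (label, tag) pairs along the path from the root; the root is [].
  The tag component only serves to distinguish siblings carrying the same label.
  The edges are v -> v @ [a]; the tine ending in vertex v is identified with v;
  the depth of v (= length of its tine) is length v.\<close>

type_synonym vtx = "(nat \<times> nat) list"

definition lbl :: "vtx \<Rightarrow> nat" where
  "lbl v = (if v = [] then 0 else fst (last v))"

definition is_fork :: "bool list \<Rightarrow> vtx set \<Rightarrow> bool" where
  "is_fork w F \<longleftrightarrow>
     finite F \<and> [] \<in> F \<and> (\<forall>v\<in>F. \<forall>u. prefix u v \<longrightarrow> u \<in> F) \<and>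
     \<comment> \<open>(F1),(F2): root labelled 0, labels strictly increasing along paths, labels in 0..n\<close>
     (\<forall>v\<in>F. sorted_wrt (<) (0 # map fst v) \<and> (\<forall>a\<in>set v. fst a \<le> length w)) \<and>
     \<comment> \<open>(F3)\<close>
     (\<forall>i. honest_idx w i \<longrightarrow> (\<exists>!v. v \<in> F \<and> v \<noteq> [] \<and> lbl v = i)) \<and>
     \<comment> \<open>(F4)\<close>
     (\<forall>u\<in>F. \<forall>v\<in>F. u \<noteq> [] \<longrightarrow> v \<noteq> [] \<longrightarrow> honest_idx w (lbl u) \<longrightarrow>
        honest_idx w (lbl v) \<longrightarrow> lbl u < lbl v \<longrightarrow> length u < length v)"

definition closed_fork :: "bool list \<Rightarrow> vtx set \<Rightarrow> bool" where
  "closed_fork w F \<longleftrightarrow> is_fork w F \<and>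
     (\<forall>v\<in>F. (\<forall>a. v @ [a] \<notin> F) \<longrightarrow> v = [] \<or> honest_idx w (lbl v))"

definition height :: "vtx set \<Rightarrow> nat" where
  "height F = Max (length ` F)"

definition gap :: "vtx set \<Rightarrow> vtx \<Rightarrow> nat" where
  "gap F t = height F - length t"

definition reserve :: "bool list \<Rightarrow> vtx \<Rightarrow> nat" where
  "reserve w t = card {i. adv_idx w i \<and> i > lbl t}"

definition reach :: "bool list \<Rightarrow> vtx set \<Rightarrow> vtx \<Rightarrow> int" where
  "reach w F t = int (reserve w t) - int (gap F t)"

definition disjoint_over :: "nat \<Rightarrow> vtx \<Rightarrow> vtx \<Rightarrow> bool" where
  "disjoint_over n0 t1 t2 \<longleftrightarrow>
     (\<forall>u. u \<noteq> [] \<longrightarrow> prefix u t1 \<longrightarrow> prefix u t2 \<longrightarrow> lbl u \<le> n0)"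

definition mu_fork :: "bool list \<Rightarrow> bool list \<Rightarrow> vtx set \<Rightarrow> int" where
  "mu_fork x y F = Max {min (reach (x @ y) F t1) (reach (x @ y) F t2) | t1 t2.
      t1 \<in> F \<and> t2 \<in> F \<and> disjoint_over (length x) t1 t2}"

definition mu :: "bool list \<Rightarrow> bool list \<Rightarrow> int" where
  "mu x y = Max {mu_fork x y F | F. closed_fork (x @ y) F}"

text \<open>epsilon-martingale condition for a random string of length n (distribution P):
  Pr[Z_{t+1} = 1 | Z_1..Z_t = p] <= (1 - eps)/2 for every prefix p, written multiplicatively.\<close>
definition eps_martingale :: "real \<Rightarrow> nat \<Rightarrow> bool list pmf \<Rightarrow> bool" where
  "eps_martingale eps n P \<longleftrightarrow>
     (\<forall>t < n. \<forall>p. length p = t \<longrightarrow>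
        measure_pmf.prob P {w. take t w = p \<and> w ! t}
          \<le> (1 - eps) / 2 * measure_pmf.prob P {w. take t w = p})"

fun bern_list :: "nat \<Rightarrow> real \<Rightarrow> bool list pmf" where
  "bern_list 0 q = return_pmf []"
| "bern_list (Suc n) q = map_pmf (\<lambda>(b, bs). b # bs) (pair_pmf (bernoulli_pmf q) (bern_list n q))"

end

theory Submission
  imports Defs
begin


definition bval :: "bool \<Rightarrow> int" where "bval e = (if e then 1 else -1)"

definition S :: "bool list \<Rightarrow> nat \<Rightarrow> nat \<Rightarrow> int" where
  "S w a b = (\<Sum>i\<in>{a..<b}. bval (w ! i))"

lemma S_empty[simp]: "S w a a = 0" by (simp add: S_def)

lemma S_split: "a \<le> b \<Longrightarrow> b \<le> c \<Longrightarrow> S w a c = S w a b + S w b c"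
  unfolding S_def by (simp add: sum.atLeastLessThan_concat)

lemma S_Cons_Suc: "S (e # s) (Suc a) (Suc b) = S s a b"
  unfolding S_def by (subst sum.shift_bounds_Suc_ivl) simp

lemma S_Cons_0: "S (e # s) 0 (Suc b) = bval e + S s 0 b"
proof -
  have "S (e # s) 0 (Suc b) = bval ((e#s)!0) + (\<Sum>i\<in>{Suc 0..<Suc b}. bval ((e#s) ! i))"
    unfolding S_def by (subst sum.atLeast_Suc_lessThan) auto
  also have "\<dots> = bval ((e#s)!0) + (\<Sum>i\<in>{0..<b}. bval ((e#s) ! Suc i))"
    by (subst sum.shift_bounds_Suc_ivl) simp
  finally have "S (e # s) 0 (Suc b) = bval ((e#s)!0) + (\<Sum>i\<in>{0..<b}. bval ((e#s) ! Suc i))" .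
  then show ?thesis by (simp add: S_def)
qed

lemma S_append_shift: "S (z @ s) (length z + a) (length z + b) = S s a b"
  by (induction z) (simp_all add: S_Cons_Suc)

definition catalan :: "bool list \<Rightarrow> nat \<Rightarrow> bool" where
  "catalan w h \<longleftrightarrow> h < length w \<and> \<not> w ! h \<and>
     (\<forall>a b. a \<le> h \<longrightarrow> h < b \<longrightarrow> b \<le> length w \<longrightarrow> S w a b < 0)"

definition cand :: "bool list \<Rightarrow> nat \<Rightarrow> nat \<Rightarrow> bool" where
  "cand s h g \<longleftrightarrow> h < length s \<and> \<not> s ! h \<and>
     (\<forall>b. h < b \<longrightarrow> b \<le> length s \<longrightarrow> S s h b < 0) \<and>
     (\<forall>a\<le>h. S s a h \<le> 0) \<and> S s 0 h \<le> 1 - int g"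

lemma cand_catalan: "cand w h g \<Longrightarrow> catalan w h"
  unfolding cand_def catalan_def
proof (intro conjI allI impI; (elim conjE)?)
  fix a b assume *: "h < length w" "\<not> w ! h" "\<forall>b. h < b \<longrightarrow> b \<le> length w \<longrightarrow> S w h b < 0"
    "\<forall>a\<le>h. S w a h \<le> 0" "a \<le> h" "h < b" "b \<le> length w"
  have "S w a b = S w a h + S w h b" using * by (intro S_split) auto
  then show "S w a b < 0" using * by fastforce
qed auto

fun stepy :: "bool \<Rightarrow> nat \<times> nat \<Rightarrow> nat \<times> nat" where
  "stepy e (\<sigma>, g) = (if e then (Suc \<sigma>, g - 1)
      else if \<sigma> = 0 then (0, Suc g) else (\<sigma> - 1, if g = 0 then 0 else Suc g))"

definition sty :: "bool list \<Rightarrow> nat \<times> nat" where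
  "sty y = foldr stepy y (0, 0)"

fun stepx :: "bool \<Rightarrow> nat \<Rightarrow> nat" where
  "stepx e g = (if e then g - 1 else if g = 0 then 0 else Suc g)"

definition Gx :: "bool list \<Rightarrow> nat \<Rightarrow> nat" where
  "Gx z g = foldr stepx z g"

lemma sty_Cons: "sty (e # s) = stepy e (sty s)" by (simp add: sty_def)
lemma Gx_Cons: "Gx (e # z) g = stepx e (Gx z g)" by (simp add: Gx_def)

lemma sty_sigma: "b \<le> length y \<Longrightarrow> S y 0 b \<le> int (fst (sty y))"
proof (induction y arbitrary: b)
  case Nil then show ?case by simp
next
  case (Cons e s)
  obtain \<sigma> g where st: "sty s = (\<sigma>, g)" by (cases "sty s")
  show ?case
  proof (cases b)
    case 0 then show ?thesis by simp
  next
    case (Suc b')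
    have ih: "S s 0 b' \<le> int \<sigma>" using Cons Suc st by simp
    show ?thesis using ih st by (auto simp: Suc S_Cons_0 sty_Cons bval_def)
  qed
qed

lemma cand_Cons:
  assumes "cand s h g" "g \<ge> 1" "g' = (if e then g - 1 else Suc g)" "g' \<ge> 1"
  shows "cand (e # s) (Suc h) g'"
  unfolding cand_def
proof (intro conjI allI impI)
  show "Suc h < length (e # s)" using assms(1) by (simp add: cand_def)
  show "\<not> (e # s) ! Suc h" using assms(1) by (simp add: cand_def)
  fix b assume "Suc h < b" "b \<le> length (e # s)"
  then obtain b' where "b = Suc b'" "h < b'" "b' \<le> length s" by (cases b) auto
  then show "S (e # s) (Suc h) b < 0" using assms(1) by (simp add: cand_def S_Cons_Suc)
next
  fix a assume a: "a \<le> Suc h"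
  show "S (e # s) a (Suc h) \<le> 0"
  proof (cases a)
    case 0
    have "S s 0 h \<le> 1 - int g" using assms(1) by (simp add: cand_def)
    then show ?thesis using assms(2-4) 0 by (auto simp: S_Cons_0 bval_def split: if_splits)
  next
    case (Suc a')
    then show ?thesis using a assms(1) by (simp add: cand_def S_Cons_Suc)
  qed
next
  have "S s 0 h \<le> 1 - int g" using assms(1) by (simp add: cand_def)
  then show "S (e # s) 0 (Suc h) \<le> 1 - int g'" using assms(2-4)
    by (auto simp: S_Cons_0 bval_def split: if_splits)
qed

lemma sty_cand: "snd (sty y) \<ge> 1 \<Longrightarrow> \<exists>h. cand y h (snd (sty y))"
proof (induction y)
  case Nil then show ?case by (simp add: sty_def)
next
  case (Cons e s)
  obtain \<sigma> g where st: "sty s = (\<sigma>, g)" by (cases "sty s")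
  show ?case
  proof (cases "g \<ge> 1")
    case True
    then obtain h where h: "cand s h g" using Cons st by auto
    have g': "snd (sty (e # s)) = (if e then g - 1 else Suc g)"
      using st True by (simp add: sty_Cons)
    show ?thesis using cand_Cons[OF h True g'] Cons.prems by blast
  next
    case False
    then have g0: "g = 0" by simp
    then have ne: "\<not> e" "\<sigma> = 0" using Cons.prems st by (auto simp: sty_Cons split: if_splits)
    have g1: "snd (sty (e # s)) = 1" using st g0 ne by (simp add: sty_Cons)
    have sig: "\<And>b. b \<le> length s \<Longrightarrow> S s 0 b \<le> 0" using sty_sigma[of _ s] st ne by simp
    have "cand (e # s) 0 1"
      unfolding cand_def
    proof (intro conjI allI impI)
      fix b assume "0 < b" "b \<le> length (e # s)"
      then obtain b' where "b = Suc b'" "b' \<le> length s" by (cases b) auto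
      then show "S (e # s) 0 b < 0" using sig[of b'] ne by (simp add: S_Cons_0 bval_def)
    qed (use ne in auto)
    then show ?thesis using g1 by metis
  qed
qed

lemma Gx_cand: "cand s h g \<Longrightarrow> g \<ge> 1 \<Longrightarrow> Gx z g \<ge> 1 \<Longrightarrow> cand (z @ s) (length z + h) (Gx z g)"
proof (induction z)
  case Nil then show ?case by (simp add: Gx_def)
next
  case (Cons e z)
  have pos: "Gx z g \<ge> 1" using Cons.prems by (cases "Gx z g") (auto simp: Gx_Cons split: if_splits)
  have ih: "cand (z @ s) (length z + h) (Gx z g)" using Cons pos by blast
  have "Gx (e # z) g = (if e then Gx z g - 1 else Suc (Gx z g))" using pos by (simp add: Gx_Cons)
  from cand_Cons[OF ih pos this] Cons.prems show ?case by simp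
qed

lemma Gx_zero: "Gx z 0 = 0"
  by (induction z) (simp_all add: Gx_def)

theorem Gx_catalan:
  assumes "Gx x (snd (sty y)) \<ge> 1"
  shows "\<exists>h. length x \<le> h \<and> catalan (x @ y) h"
proof -
  have g1: "snd (sty y) \<ge> 1" using assms Gx_zero by (cases "snd (sty y)") auto
  then obtain h where "cand y h (snd (sty y))" using sty_cand by blast
  from Gx_cand[OF this g1 assms] have "catalan (x @ y) (length x + h)" by (rule cand_catalan)
  then show ?thesis by (intro exI[of _ "length x + h"]) auto
qed


lemma pw8: fixes e :: real assumes "0 < e" "e \<le> 1/8" shows "e^(k+n) \<le> e^k * (1/8)^n"
proof -
  have "e^n \<le> (1/8)^n" using assms by (intro power_mono) auto
  moreover have "0 \<le> e^k" using assms by simp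
  ultimately show ?thesis by (simp add: power_add mult_left_mono)
qed

lemma pw8d: fixes e :: real assumes "0 < e" "e \<le> 1/8" shows "e^(k+n) \<le> e^k / 8^n"
proof -
  have "e^(k+n) \<le> e^k*(1/8)^n" by (rule pw8[OF assms])
  also have "\<dots> = e^k/8^n" by (simp add: power_divide)
  finally show ?thesis .
qed

context
  fixes e q c b th :: real
  assumes e: "0 < e" "e \<le> 1/8"
  and defs: "q = (1-e)/2" "c = 1 + 3*e^2/4" "b = (1-e)*c" "th = 1 - e^3/2"
begin

lemma N1: "q*c*c + (1-q)*b*b \<le> th*c*b"
proof -
  have "th*c*b - (q*c*c + (1-q)*b*b) = (1/2)*e^2 + (-1)*e^3 + (5/4)*e^4 + (-3/2)*e^5 + (33/32)*e^6 + (-9/16)*e^7 + (9/32)*e^8"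
    unfolding defs by (simp add: field_simps eval_nat_numeral)
  moreover have "e^3 \<le> e^2 / 8" using pw8d[OF e, of 2 1] by simp
  moreover have "e^5 \<le> e^2 / 512" using pw8d[OF e, of 2 3] by simp
  moreover have "e^7 \<le> e^2 / 32768" using pw8d[OF e, of 2 5] by simp
  moreover have "e^4 \<ge> 0" "e^6 \<ge> 0" "e^8 \<ge> 0" "e^2 > 0" using e by auto
  ultimately show ?thesis by linarith
qed

lemma N2: "q*c + (1-q)*b*b \<le> th*b"
proof -
  have "th*b - (q*c + (1-q)*b*b) = (1/8)*e^2 + (-5/8)*e^3 + (31/32)*e^4 + (-27/32)*e^5 + (21/32)*e^6 + (-9/32)*e^7"
    unfolding defs by (simp add: field_simps eval_nat_numeral)
  moreover have "e^3 \<le> e^2 / 8" using pw8d[OF e, of 2 1] by simp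
  moreover have "e^5 \<le> e^2 / 512" using pw8d[OF e, of 2 3] by simp
  moreover have "e^7 \<le> e^2 / 32768" using pw8d[OF e, of 2 5] by simp
  moreover have "e^4 \<ge> 0" "e^6 \<ge> 0" "e^2 > 0" using e by auto
  ultimately show ?thesis by linarith
qed

lemma N3: "q*c*c + (1-q) \<le> th*c"
proof -
  have "th*c - (q*c*c + (1-q)) = (1/4)*e^3 + (-9/32)*e^4 + (-3/32)*e^5"
    unfolding defs by (simp add: field_simps eval_nat_numeral)
  moreover have "e^4 \<le> e^3 / 8" using pw8d[OF e, of 3 1] by simp
  moreover have "e^5 \<le> e^3 / 64" using pw8d[OF e, of 3 2] by simp
  moreover have "e^3 > 0" using e by auto
  ultimately show ?thesis by linarith
qed

lemma N4: "q*c + (1-q)*b \<le> th"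
proof -
  have "th - (q*c + (1-q)*b) = (1/2)*e + (-1/4)*e^2 + (-1/8)*e^3 + (3/8)*e^4"
    unfolding defs by (simp add: field_simps eval_nat_numeral)
  moreover have "e^2 \<le> e / 8" using pw8d[OF e, of 1 1] by (simp add: numeral_2_eq_2)
  moreover have "e^3 \<le> e / 64" using pw8d[OF e, of 1 2] by (simp add: numeral_3_eq_3)
  moreover have "e^4 \<ge> 0" using e by auto
  ultimately show ?thesis using e by linarith
qed

lemma NX: "q + (1-q)*b*b \<le> b"
proof -
  have "b - (q + (1-q)*b*b) = (1/2)*e^2 + (-1/2)*e^3 + (15/32)*e^4 + (-15/32)*e^5 + (9/32)*e^6 + (-9/32)*e^7"
    unfolding defs by (simp add: field_simps eval_nat_numeral)
  moreover have "e^3 \<le> e^2 / 8" using pw8d[OF e, of 2 1] by simp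
  moreover have "e^5 \<le> e^2 / 512" using pw8d[OF e, of 2 3] by simp
  moreover have "e^7 \<le> e^2 / 32768" using pw8d[OF e, of 2 5] by simp
  moreover have "e^4 \<ge> 0" "e^6 \<ge> 0" "e^2 > 0" using e by auto
  ultimately show ?thesis by linarith
qed

lemma Nbasic: "0 \<le> q" "q \<le> 1" "1 \<le> c" "0 < b" "b \<le> 1" "0 \<le> th" "th \<le> 1"
proof -
  show "0 \<le> q" "q \<le> 1" using e defs by auto
  show "1 \<le> c" using defs by simp
  have "e^2 \<le> e / 8" using pw8d[OF e, of 1 1] by (simp add: numeral_2_eq_2)
  show "0 < b" using e defs by (simp add: add_pos_nonneg)
  have "b = 1 - e + 3*e^2/4 - 3*e^3/4" unfolding defs by (simp add: field_simps eval_nat_numeral)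
  moreover have "e^3 \<ge> 0" using e by simp
  ultimately show "b \<le> 1" using \<open>e^2 \<le> e/8\<close> e by linarith
  have "e^3 \<le> 1" using e by (simp add: power_le_one)
  then show "0 \<le> th" "th \<le> 1" using defs e by auto
qed

end


lemma set_bern: "set_pmf (bern_list n q) \<subseteq> {s. length s = n}"
  by (induction n) auto

lemma finite_len: "finite {s :: bool list. length s = n}"
  using finite_lists_length_eq[of "UNIV :: bool set" n] by simp

lemma fin_bern: "finite (set_pmf (bern_list n q))"
  using set_bern finite_len finite_subset by blast

lemma E_pair:
  fixes h :: "'a \<times> 'b \<Rightarrow> real"
  assumes "finite (set_pmf A)" "finite (set_pmf B)"
  shows "measure_pmf.expectation (pair_pmf A B) h =
         measure_pmf.expectation A (\<lambda>a. measure_pmf.expectation B (\<lambda>b. h (a, b)))"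
proof -
  have "measure_pmf.expectation (pair_pmf A B) h = (\<Sum>x\<in>set_pmf A \<times> set_pmf B. h x * pmf (pair_pmf A B) x)"
    using assms by (intro integral_measure_pmf_real) (auto simp: set_pmf_iff)
  also have "\<dots> = (\<Sum>a\<in>set_pmf A. \<Sum>b\<in>set_pmf B. h (a, b) * (pmf A a * pmf B b))"
    by (subst sum.cartesian_product) (auto intro!: sum.cong simp: pmf_pair)
  also have "\<dots> = (\<Sum>a\<in>set_pmf A. (\<Sum>b\<in>set_pmf B. h (a, b) * pmf B b) * pmf A a)"
    by (simp add: sum_distrib_left sum_distrib_right mult_ac)
  also have "\<dots> = measure_pmf.expectation A (\<lambda>a. \<Sum>b\<in>set_pmf B. h (a, b) * pmf B b)"
    using assms by (intro integral_measure_pmf_real[symmetric]) (auto simp: set_pmf_iff)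
  also have "\<dots> = measure_pmf.expectation A (\<lambda>a. measure_pmf.expectation B (\<lambda>b. h (a, b)))"
    using assms by (intro Bochner_Integration.integral_cong refl integral_measure_pmf_real[symmetric])
      (auto simp: set_pmf_iff)
  finally show ?thesis .
qed

lemma E_bern_Suc:
  fixes f :: "bool list \<Rightarrow> real"
  assumes "0 \<le> q" "q \<le> 1"
  shows "measure_pmf.expectation (bern_list (Suc n) q) f =
    q * measure_pmf.expectation (bern_list n q) (\<lambda>s. f (True # s)) +
    (1 - q) * measure_pmf.expectation (bern_list n q) (\<lambda>s. f (False # s))"
proof -
  have "measure_pmf.expectation (bern_list (Suc n) q) f =
        measure_pmf.expectation (pair_pmf (bernoulli_pmf q) (bern_list n q)) (\<lambda>(b, bs). f (b # bs))"
    by (simp add: case_prod_unfold)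
  also have "\<dots> = measure_pmf.expectation (bernoulli_pmf q) (\<lambda>b. measure_pmf.expectation (bern_list n q) (\<lambda>bs. f (b # bs)))"
    by (subst E_pair) (auto simp: fin_bern)
  also have "\<dots> = q * measure_pmf.expectation (bern_list n q) (\<lambda>s. f (True # s)) +
    (1 - q) * measure_pmf.expectation (bern_list n q) (\<lambda>s. f (False # s))"
    using assms by simp
  finally show ?thesis .
qed

lemma int_bern: "integrable (measure_pmf (bern_list n q)) (f :: bool list \<Rightarrow> real)"
  by (rule integrable_measure_pmf_finite[OF fin_bern])

lemma E_bern_step:
  fixes f g :: "bool list \<Rightarrow> real"
  assumes "0 \<le> q" "q \<le> 1" "\<And>s. q * f (True # s) + (1 - q) * f (False # s) \<le> th * g s"
  shows "measure_pmf.expectation (bern_list (Suc n) q) f \<le> th * measure_pmf.expectation (bern_list n q) g"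
proof -
  have "measure_pmf.expectation (bern_list (Suc n) q) f =
    measure_pmf.expectation (bern_list n q) (\<lambda>s. q * f (True # s) + (1 - q) * f (False # s))"
    by (subst E_bern_Suc[OF assms(1,2)]) (simp add: int_bern)
  also have "\<dots> \<le> measure_pmf.expectation (bern_list n q) (\<lambda>s. th * g s)"
    by (intro integral_mono int_bern assms(3))
  also have "\<dots> = th * measure_pmf.expectation (bern_list n q) g" by simp
  finally show ?thesis .
qed

context
  fixes e q c b th :: real
  assumes e: "0 < e" "e \<le> 1/8"
  and defs: "q = (1-e)/2" "c = 1 + 3*e^2/4" "b = (1-e)*c" "th = 1 - e^3/2"
begin

definition Phi :: "nat \<times> nat \<Rightarrow> real" where "Phi s = c ^ fst s * b ^ snd s"

lemmas NN = N1[OF e defs] N2[OF e defs] N3[OF e defs] N4[OF e defs] NX[OF e defs] Nbasic[OF e defs]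

lemma Phi_step: "q * Phi (stepy True s) + (1 - q) * Phi (stepy False s) \<le> th * Phi s"
proof -
  obtain \<sigma> g where s: "s = (\<sigma>, g)" by (cases s)
  have cb: "0 \<le> c" "0 \<le> b" using NN by auto
  show ?thesis
  proof (cases \<sigma>)
    case 0
    show ?thesis
    proof (cases g)
      case 0
      then show ?thesis using \<open>\<sigma> = 0\<close> s NN by (simp add: Phi_def)
    next
      case (Suc g')
      have "q * (c * b^g') + (1-q) * (b*b*b^g') \<le> th * (b * b^g')"
        using mult_right_mono[OF NN(2), of "b^g'"] cb by (simp add: algebra_simps)
      then show ?thesis using \<open>\<sigma> = 0\<close> Suc s by (simp add: Phi_def)
    qed
  next
    case (Suc \<sigma>')
    show ?thesis
    proof (cases g)
      case 0
      have "q * (c*c*c^\<sigma>') + (1-q) * c^\<sigma>' \<le> th * (c * c^\<sigma>')"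
        using mult_right_mono[OF NN(3), of "c^\<sigma>'"] cb by (simp add: algebra_simps)
      then show ?thesis using Suc 0 s by (simp add: Phi_def)
    next
      case (Suc g')
      have "q * (c*c*c^\<sigma>' * b^g') + (1-q) * (c^\<sigma>' * (b*b*b^g')) \<le> th * (c * c^\<sigma>' * (b * b^g'))"
        using mult_right_mono[OF NN(1), of "c^\<sigma>' * b^g'"] cb by (simp add: algebra_simps)
      then show ?thesis using \<open>\<sigma> = Suc \<sigma>'\<close> Suc s by (simp add: Phi_def)
    qed
  qed
qed

lemma stepx_pot: "q * b ^ (stepx True g) + (1 - q) * b ^ (stepx False g) \<le> b ^ g"
proof (cases g)
  case 0 then show ?thesis by simp
next
  case (Suc g')
  have cb: "0 \<le> b" using NN by auto
  have "q * b^g' + (1-q) * (b*b*b^g') \<le> b * b^g'"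
    using mult_right_mono[OF NN(5), of "b^g'"] cb by (simp add: algebra_simps)
  then show ?thesis using Suc by simp
qed

lemma Y_bound: "measure_pmf.expectation (bern_list k q) (\<lambda>y. Phi (sty y)) \<le> th ^ k"
proof (induction k)
  case 0 then show ?case by (simp add: sty_def Phi_def)
next
  case (Suc k)
  have "measure_pmf.expectation (bern_list (Suc k) q) (\<lambda>y. Phi (sty y))
       \<le> th * measure_pmf.expectation (bern_list k q) (\<lambda>y. Phi (sty y))"
    using NN by (intro E_bern_step) (auto simp: sty_Cons Phi_step)
  also have "\<dots> \<le> th * th ^ k" using Suc NN by (intro mult_left_mono) auto
  finally show ?case by simp
qed

lemma X_bound: "measure_pmf.expectation (bern_list m q) (\<lambda>x. b ^ Gx x g) \<le> b ^ g"
proof (induction m)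
  case 0 then show ?case by (simp add: Gx_def)
next
  case (Suc m)
  have "measure_pmf.expectation (bern_list (Suc m) q) (\<lambda>x. b ^ Gx x g)
       \<le> 1 * measure_pmf.expectation (bern_list m q) (\<lambda>x. b ^ Gx x g)"
    using NN by (intro E_bern_step) (auto simp: Gx_Cons stepx_pot simp del: stepx.simps)
  then show ?case using Suc by simp
qed

lemma G_bound:
  "measure_pmf.prob (pair_pmf (bern_list m q) (bern_list k q)) {(x, y). Gx x (snd (sty y)) = 0} \<le> th ^ k"
proof -
  let ?M = "pair_pmf (bern_list m q) (bern_list k q)"
  let ?S = "{(x, y). Gx x (snd (sty y)) = 0}"
  have fin: "finite (set_pmf ?M)" by (simp add: fin_bern)
  have "measure_pmf.prob ?M ?S = measure_pmf.expectation ?M (indicator ?S)" by simp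
  also have "\<dots> \<le> measure_pmf.expectation ?M (\<lambda>(x, y). b ^ Gx x (snd (sty y)))"
  proof (intro integral_mono integrable_measure_pmf_finite[OF fin])
    fix z show "indicator ?S z \<le> (case z of (x, y) \<Rightarrow> b ^ Gx x (snd (sty y)))"
      using NN by (cases z) (auto simp: indicator_def)
  qed
  also have "\<dots> = measure_pmf.expectation (pair_pmf (bern_list k q) (bern_list m q))
       (\<lambda>(y, x). b ^ Gx x (snd (sty y)))"
    by (subst pair_commute_pmf) (simp add: case_prod_unfold)
  also have "\<dots> = measure_pmf.expectation (bern_list k q)
       (\<lambda>y. measure_pmf.expectation (bern_list m q) (\<lambda>x. b ^ Gx x (snd (sty y))))"
    by (subst E_pair) (auto simp: fin_bern)
  also have "\<dots> \<le> measure_pmf.expectation (bern_list k q) (\<lambda>y. Phi (sty y))"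
  proof (intro integral_mono int_bern)
    fix y
    have "measure_pmf.expectation (bern_list m q) (\<lambda>x. b ^ Gx x (snd (sty y))) \<le> b ^ snd (sty y)"
      by (rule X_bound)
    also have "\<dots> \<le> Phi (sty y)" unfolding Phi_def
      using mult_right_mono[OF one_le_power[of c "fst (sty y)"], of "b ^ snd (sty y)"] NN by auto
    finally show "measure_pmf.expectation (bern_list m q) (\<lambda>x. b ^ Gx x (snd (sty y))) \<le> Phi (sty y)" .
  qed
  also have "\<dots> \<le> th ^ k" by (rule Y_bound)
  finally show ?thesis .
qed

end


definition nA :: "bool list \<Rightarrow> nat \<Rightarrow> nat \<Rightarrow> nat" where
  "nA w a b = card {i. adv_idx w i \<and> a < i \<and> i \<le> b}"
definition nH :: "bool list \<Rightarrow> nat \<Rightarrow> nat \<Rightarrow> nat" where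
  "nH w a b = card {i. honest_idx w i \<and> a < i \<and> i \<le> b}"

lemma S_count: "a \<le> b \<Longrightarrow> b \<le> length w \<Longrightarrow> S w a b = int (nA w a b) - int (nH w a b)"
proof (induction b)
  case 0
  have "{i. adv_idx w i \<and> a < i \<and> i \<le> 0} = {}" "{i. honest_idx w i \<and> a < i \<and> i \<le> 0} = {}" by auto
  then show ?case using 0 by (simp only: nA_def nH_def) simp
next
  case (Suc b)
  show ?case
  proof (cases "a = Suc b")
    case True
    have "{i. adv_idx w i \<and> a < i \<and> i \<le> Suc b} = {}" "{i. honest_idx w i \<and> a < i \<and> i \<le> Suc b} = {}"
      using True by auto
    then show ?thesis using True by (simp only: nA_def nH_def) simp
  next
    case False
    then have ab: "a \<le> b" using Suc by simp
    have ih: "S w a b = int (nA w a b) - int (nH w a b)" using Suc ab by simp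
    have S1: "S w a (Suc b) = S w a b + bval (w ! b)" unfolding S_def using ab by simp
    have eA: "{i. adv_idx w i \<and> a < i \<and> i \<le> Suc b} =
      {i. adv_idx w i \<and> a < i \<and> i \<le> b} \<union> (if w ! b then {Suc b} else {})"
      using Suc.prems ab by (auto simp: adv_idx_def le_Suc_eq)
    have eH: "{i. honest_idx w i \<and> a < i \<and> i \<le> Suc b} =
      {i. honest_idx w i \<and> a < i \<and> i \<le> b} \<union> (if w ! b then {} else {Suc b})"
      using Suc.prems ab by (auto simp: honest_idx_def le_Suc_eq)
    have fA: "finite {i. adv_idx w i \<and> a < i \<and> i \<le> b}" by (rule finite_subset[of _ "{..b}"]) auto
    have fH: "finite {i. honest_idx w i \<and> a < i \<and> i \<le> b}" by (rule finite_subset[of _ "{..b}"]) auto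
    have "nA w a (Suc b) = nA w a b + (if w ! b then 1 else 0)"
      unfolding nA_def eA using fA by (auto simp: card_insert_if)
    moreover have "nH w a (Suc b) = nH w a b + (if w ! b then 0 else 1)"
      unfolding nH_def eH using fH by (auto simp: card_insert_if)
    ultimately show ?thesis using S1 ih by (simp add: bval_def)
  qed
qed

lemma fork_sorted: "is_fork w F \<Longrightarrow> v \<in> F \<Longrightarrow> sorted_wrt (<) (0 # map fst v)"
  unfolding is_fork_def by blast

lemma fork_lbl_bound: "is_fork w F \<Longrightarrow> v \<in> F \<Longrightarrow> a \<in> set v \<Longrightarrow> 0 < fst a \<and> fst a \<le> length w"
  unfolding is_fork_def by auto

lemma fork_prefix: "is_fork w F \<Longrightarrow> v \<in> F \<Longrightarrow> prefix u v \<Longrightarrow> u \<in> F"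
  unfolding is_fork_def by blast

lemma fork_finite: "is_fork w F \<Longrightarrow> finite F" unfolding is_fork_def by blast
lemma fork_root: "is_fork w F \<Longrightarrow> [] \<in> F" unfolding is_fork_def by blast

lemma fork_len: assumes "is_fork w F" "v \<in> F" shows "length v \<le> length w"
proof -
  have s: "sorted_wrt (<) (map fst v)" using fork_sorted[OF assms] by simp
  have d: "distinct (map fst v)" using s by (rule strict_sorted_iff[THEN iffD1, THEN conjunct2])
  have "set (map fst v) \<subseteq> {1..length w}" using fork_lbl_bound[OF assms] by force
  then have "card (set (map fst v)) \<le> length w" using card_mono[of "{1..length w}"] by fastforce
  then show ?thesis using distinct_card[OF d] by simp
qed

lemma height_ge: "is_fork w F \<Longrightarrow> v \<in> F \<Longrightarrow> length v \<le> height F"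
  unfolding height_def using fork_finite by (intro Max_ge) auto

lemma height_le: assumes "is_fork w F" shows "height F \<le> length w"
proof -
  have "height F \<in> length ` F" unfolding height_def using fork_finite[OF assms] fork_root[OF assms]
    by (intro Max_in) auto
  then show ?thesis using fork_len[OF assms] by auto
qed

lemma lbl_take: "1 \<le> p \<Longrightarrow> p \<le> length t \<Longrightarrow> lbl (take p t) = fst (t ! (p - 1))"
  unfolding lbl_def by (cases p) (auto simp: last_conv_nth min_def)

lemma lab_mono: assumes "is_fork w F" "t \<in> F" "i < j" "j < length t"
  shows "fst (t ! i) < fst (t ! j)"
proof -
  have "sorted_wrt (<) (map fst t)" using fork_sorted[OF assms(1,2)] by simp
  then show ?thesis using assms(3,4) by (auto simp: sorted_wrt_iff_nth_less)
qed

lemma lab_bound: assumes "is_fork w F" "t \<in> F" "i < length t"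
  shows "0 < fst (t ! i) \<and> fst (t ! i) \<le> length w"
  using fork_lbl_bound[OF assms(1,2)] assms(3) nth_mem by blast

definition vh :: "vtx set \<Rightarrow> nat \<Rightarrow> vtx" where
  "vh F i = (THE v. v \<in> F \<and> v \<noteq> [] \<and> lbl v = i)"

lemma vh: assumes "is_fork w F" "honest_idx w i"
  shows "vh F i \<in> F" "vh F i \<noteq> []" "lbl (vh F i) = i"
proof -
  have "\<exists>!v. v \<in> F \<and> v \<noteq> [] \<and> lbl v = i" using assms unfolding is_fork_def by blast
  from theI'[OF this] show "vh F i \<in> F" "vh F i \<noteq> []" "lbl (vh F i) = i"
    unfolding vh_def by auto
qed

lemma vh_unique: assumes "is_fork w F" "honest_idx w i" "v \<in> F" "v \<noteq> []" "lbl v = i"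
  shows "vh F i = v"
proof -
  have "\<exists>!v. v \<in> F \<and> v \<noteq> [] \<and> lbl v = i" using assms unfolding is_fork_def by blast
  then show ?thesis using assms vh[OF assms(1,2)] by blast
qed

definition dep :: "vtx set \<Rightarrow> nat \<Rightarrow> nat" where
  "dep F i = (if i = 0 then 0 else length (vh F i))"

lemma dep_less: assumes "is_fork w F" "i = 0 \<or> honest_idx w i" "honest_idx w j" "i < j"
  shows "dep F i < dep F j"
proof (cases "i = 0")
  case True
  have "vh F j \<noteq> []" using vh[OF assms(1,3)] by simp
  then show ?thesis using True assms(4) by (simp add: dep_def)
next
  case False
  then have hi: "honest_idx w i" using assms(2) by simp
  have j0: "j \<noteq> 0" using assms(4) by simp
  have "length (vh F i) < length (vh F j)"
    using assms(1) vh[OF assms(1) hi] vh[OF assms(1,3)] hi assms(3,4) unfolding is_fork_def by metis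
  then show ?thesis using False j0 by (simp add: dep_def)
qed

lemma dep_count: assumes "is_fork w F" "i = 0 \<or> honest_idx w i" "honest_idx w j" "i < j"
  shows "dep F i + nH w i j \<le> dep F j"
proof -
  let ?H = "{l. honest_idx w l \<and> i < l \<and> l \<le> j}"
  have inj: "inj_on (dep F) ?H"
  proof (rule inj_onI)
    fix l1 l2 assume l: "l1 \<in> ?H" "l2 \<in> ?H" "dep F l1 = dep F l2"
    show "l1 = l2"
    proof (rule ccontr)
      assume "l1 \<noteq> l2"
      then consider "l1 < l2" | "l2 < l1" by linarith
      then show False using dep_less[OF assms(1), of l1 l2] dep_less[OF assms(1), of l2 l1] l by auto
    qed
  qed
  have sub: "dep F ` ?H \<subseteq> {Suc (dep F i)..dep F j}"
  proof
    fix d assume "d \<in> dep F ` ?H"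
    then obtain l where l: "l \<in> ?H" "d = dep F l" by blast
    have "dep F i < dep F l" using dep_less[OF assms(1,2)] l by auto
    moreover have "dep F l \<le> dep F j"
      using dep_less[OF assms(1), of l j] l assms(3) by (cases "l = j") auto
    ultimately show "d \<in> {Suc (dep F i)..dep F j}" using l by auto
  qed
  have "nH w i j \<le> card {Suc (dep F i)..dep F j}"
    unfolding nH_def by (rule card_inj_on_le[OF inj sub]) simp
  then show ?thesis using dep_less[OF assms] by simp
qed


lemma tine_hon: assumes "is_fork w F" "t \<in> F" "1 \<le> p" "p \<le> length t"
    "honest_idx w (fst (t ! (p - 1)))"
  shows "dep F (fst (t ! (p - 1))) = p" "vh F (fst (t ! (p - 1))) = take p t"
proof -
  have tp: "take p t \<in> F" using fork_prefix[OF assms(1,2)] by (simp add: take_is_prefix)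
  have ne: "take p t \<noteq> []" using assms(3,4) by auto
  have l: "lbl (take p t) = fst (t ! (p - 1))" using lbl_take assms(3,4) by simp
  show v: "vh F (fst (t ! (p - 1))) = take p t" using vh_unique[OF assms(1,5) tp ne l] .
  have "fst (t ! (p - 1)) \<noteq> 0" using lab_bound[OF assms(1,2), of "p-1"] assms(3,4) by auto
  then show "dep F (fst (t ! (p - 1))) = p" using v assms(4) by (simp add: dep_def)
qed

lemma adv_or_hon: "1 \<le> i \<Longrightarrow> i \<le> length w \<Longrightarrow> \<not> honest_idx w i \<Longrightarrow> adv_idx w i"
  by (auto simp: honest_idx_def adv_idx_def)

lemma nH_split_last: assumes "honest_idx w h'" "a < h'"
  shows "nH w a h' = nH w a (h' - 1) + 1"
proof -
  have "{i. honest_idx w i \<and> a < i \<and> i \<le> h'} = insert h' {i. honest_idx w i \<and> a < i \<and> i \<le> h' - 1}"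
    using assms by auto
  moreover have "finite {i. honest_idx w i \<and> a < i \<and> i \<le> h' - 1}" by (rule finite_subset[of _ "{..h'}"]) auto
  moreover have "h' \<notin> {i. honest_idx w i \<and> a < i \<and> i \<le> h' - 1}" using assms by (auto simp: honest_idx_def)
  ultimately show ?thesis unfolding nH_def by simp
qed

lemma catalan_tine:
  assumes fork: "is_fork w F" and tF: "t \<in> F" and reach: "0 \<le> reach w F t"
    and hh: "honest_idx w h"
    and cat: "\<And>a b. a < h \<Longrightarrow> h \<le> b \<Longrightarrow> b \<le> length w \<Longrightarrow> nA w a b < nH w a b"
    and np: "\<not> prefix (vh F h) t"
  shows False
proof -
  define L where "L = length t"
  define lab where "lab p = fst (t ! (p - 1))" for p
  have labb: "0 < lab p \<and> lab p \<le> length w" if "1 \<le> p" "p \<le> L" for p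
    using lab_bound[OF fork tF, of "p - 1"] that unfolding lab_def L_def by auto
  have labm: "lab p < lab p'" if "1 \<le> p" "p < p'" "p' \<le> L" for p p'
    using lab_mono[OF fork tF, of "p - 1" "p' - 1"] that unfolding lab_def L_def by auto
  have labh: "dep F (lab p) = p" if "1 \<le> p" "p \<le> L" "honest_idx w (lab p)" for p
    using tine_hon[OF fork tF, of p] that unfolding lab_def L_def by auto
  have noh: "lab p \<noteq> h" if "1 \<le> p" "p \<le> L" for p
  proof
    assume "lab p = h"
    then have "vh F h = take p t" using tine_hon(2)[OF fork tF, of p] that hh unfolding lab_def L_def by auto
    then show False using np by (simp add: take_is_prefix)
  qed
  define P where "P = {p. 1 \<le> p \<and> p \<le> L \<and> honest_idx w (lab p) \<and> lab p < h}"
  have finP: "finite P" unfolding P_def by (rule finite_subset[of _ "{..L}"]) auto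
  define g0 where "g0 = (if P = {} then 0 else Max P)"
  define g where "g = (if g0 = 0 then 0 else lab g0)"
  have g0P: "g0 = 0 \<or> g0 \<in> P" unfolding g0_def using finP by (auto intro: Max_in)
  have g0L: "g0 \<le> L" using g0P unfolding P_def by auto
  have gh: "g = 0 \<or> honest_idx w g" "g < h"
    using g0P hh unfolding g_def P_def by (auto simp: honest_idx_def)
  have depg: "dep F g = g0"
    using g0P labh unfolding g_def P_def by (auto simp: dep_def[of F 0])
  have above: "g < lab p" if "g0 < p" "p \<le> L" for p
  proof (cases "g0 = 0")
    case True then show ?thesis using labb[of p] that unfolding g_def by auto
  next
    case False then show ?thesis using labm[of g0 p] that g0P unfolding g_def P_def by auto
  qed
  have notP: "h < lab p" if "g0 < p" "p \<le> L" "honest_idx w (lab p)" for p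
  proof -
    have "p \<notin> P" using that finP unfolding g0_def by (auto split: if_splits dest: Max_ge)
    then have "\<not> lab p < h" using that unfolding P_def by auto
    then show ?thesis using noh[of p] that by linarith
  qed
  define Q where "Q = {p. g0 < p \<and> p \<le> L \<and> honest_idx w (lab p)}"
  have finQ: "finite Q" unfolding Q_def by (rule finite_subset[of _ "{..L}"]) auto
  show False
  proof (cases "Q = {}")
    case False
    define p1 where "p1 = Min Q"
    have p1Q: "p1 \<in> Q" using Min_in[OF finQ False] unfolding p1_def .
    define h' where "h' = lab p1"
    have p1: "g0 < p1" "p1 \<le> L" "honest_idx w h'" using p1Q unfolding Q_def h'_def by auto
    have hh': "h < h'" using notP p1 unfolding h'_def by auto
    have deph': "dep F h' = p1" using labh[of p1] p1 unfolding h'_def by auto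
    have h'n: "h' \<le> length w" using p1 by (auto simp: honest_idx_def)
    have btw: "lab p \<in> {i. adv_idx w i \<and> g < i \<and> i \<le> h' - 1}" if "p \<in> {Suc g0..<p1}" for p
    proof -
      have pr: "g0 < p" "p < p1" "1 \<le> p" "p \<le> L" using that p1 by auto
      have "p \<notin> Q" using pr Min_le[OF finQ] unfolding p1_def by force
      then have "\<not> honest_idx w (lab p)" using pr unfolding Q_def by auto
      then have "adv_idx w (lab p)" using labb[of p] pr by (intro adv_or_hon) auto
      moreover have "lab p < h'" using labm[of p p1] pr p1 unfolding h'_def by auto
      ultimately show ?thesis using above[of p] pr by auto
    qed
    have inj: "inj_on lab {Suc g0..<p1}"
    proof (rule inj_onI)
      fix a b assume ab: "a \<in> {Suc g0..<p1}" "b \<in> {Suc g0..<p1}" "lab a = lab b"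
      show "a = b"
      proof (rule ccontr)
        assume "a \<noteq> b"
        then consider "a < b" | "b < a" by linarith
        then show False using labm[of a b] labm[of b a] ab p1 by (cases; auto)
      qed
    qed
    have "card {Suc g0..<p1} \<le> nA w g (h' - 1)"
      unfolding nA_def using btw
      by (intro card_inj_on_le[OF inj]) (auto intro: finite_subset[of _ "{..h'}"])
    then have c1: "p1 - Suc g0 \<le> nA w g (h' - 1)" by simp
    have c2: "g0 + nH w g h' \<le> p1" using dep_count[OF fork gh(1) p1(3)] gh(2) hh' depg deph' by simp
    have c3: "nH w g h' = nH w g (h' - 1) + 1" using nH_split_last[OF p1(3)] gh(2) hh' by simp
    have "nA w g (h' - 1) < nH w g (h' - 1)" using cat[of g "h' - 1"] gh(2) hh' h'n by simp
    then show False using c1 c2 c3 by linarith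
  next
    case True
    define lt where "lt = lbl t"
    have ltL: "lt = (if L = 0 then 0 else lab L)"
      unfolding lt_def lab_def L_def by (auto simp: lbl_def last_conv_nth)
    have Badv: "lab p \<in> {i. adv_idx w i \<and> g < i \<and> i \<le> lt}" if "p \<in> {Suc g0..L}" for p
    proof -
      have pr: "g0 < p" "1 \<le> p" "p \<le> L" using that by auto
      then have "\<not> honest_idx w (lab p)" using True unfolding Q_def by auto
      then have "adv_idx w (lab p)" using labb[of p] pr by (intro adv_or_hon) auto
      moreover have "lab p \<le> lt" using labm[of p L] pr ltL by (cases "p = L") auto
      ultimately show ?thesis using above[of p] pr by auto
    qed
    have inj: "inj_on lab {Suc g0..L}"
    proof (rule inj_onI)
      fix a b assume ab: "a \<in> {Suc g0..L}" "b \<in> {Suc g0..L}" "lab a = lab b"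
      show "a = b"
      proof (rule ccontr)
        assume "a \<noteq> b"
        then consider "a < b" | "b < a" by linarith
        then show False using labm[of a b] labm[of b a] ab by (cases; auto)
      qed
    qed
    define R where "R = {i. adv_idx w i \<and> lt < i}"
    define B where "B = lab ` {Suc g0..L}"
    have finR: "finite R" unfolding R_def by (rule finite_subset[of _ "{..length w}"]) (auto simp: adv_idx_def)
    have cardB: "card B = L - g0" unfolding B_def using card_image[OF inj] by simp
    have disj: "B \<inter> R = {}" using Badv unfolding B_def R_def by fastforce
    have sub: "B \<union> R \<subseteq> {i. adv_idx w i \<and> g < i \<and> i \<le> length w}"
    proof -
      have "g \<le> lt"
      proof (cases "L = g0")
        case True
        then show ?thesis using ltL g0P unfolding g_def by (auto simp: P_def)
      next
        case False
        then have "lab L \<le> lt" "g < lab L" using ltL above[of L] g0L by auto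
        then show ?thesis by simp
      qed
      then show ?thesis using Badv unfolding B_def R_def by (auto simp: adv_idx_def)
    qed
    have finB: "finite B" unfolding B_def by simp
    have "card B + card R \<le> nA w g (length w)"
      unfolding nA_def using card_Un_disjoint[OF finB finR disj] sub
      by (metis (no_types, lifting) card_mono finite_subset[of _ "{..length w}"] finite_atMost mem_Collect_eq subsetI
          adv_idx_def atMost_iff)
    then have c1: "L - g0 + reserve w t \<le> nA w g (length w)"
      using cardB unfolding reserve_def R_def lt_def by (simp add: gt_ex)
    have "reserve w t \<ge> gap F t" using reach unfolding reach_def by simp
    then have c2: "height F \<le> L + reserve w t"
      unfolding gap_def L_def by linarith
    define Hs where "Hs = {i. honest_idx w i}"
    have finHs: "finite Hs" unfolding Hs_def by (rule finite_subset[of _ "{..length w}"]) (auto simp: honest_idx_def)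
    define jm where "jm = Max Hs"
    have jm: "honest_idx w jm" "h \<le> jm" using Max_in[OF finHs] Max_ge[OF finHs] hh unfolding jm_def Hs_def by auto
    have jmge: "i \<le> jm" if "honest_idx w i" for i using Max_ge[OF finHs] that unfolding jm_def Hs_def by auto
    have "nH w g jm = nH w g (length w)"
      unfolding nH_def using jmge jm by (intro arg_cong[where f=card]) (auto simp: honest_idx_def)
    moreover have "dep F g + nH w g jm \<le> dep F jm" using dep_count[OF fork gh(1) jm(1)] gh(2) jm(2) by simp
    moreover have "dep F jm \<le> height F"
      using height_ge[OF fork vh(1)[OF fork jm(1)]] jm(2) gh(2) by (simp add: dep_def)
    ultimately have c3: "g0 + nH w g (length w) \<le> height F" using depg by simp
    have hn: "h \<le> length w" using hh by (simp add: honest_idx_def)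
    have "nA w g (length w) < nH w g (length w)" using cat[of g "length w"] gh(2) hn by simp
    then show False using c1 c2 c3 g0L by linarith
  qed
qed


lemma sorted_prefix_lbl_less:
  assumes s: "sorted_wrt (<) (map fst c)" and u: "prefix u c" and v: "prefix v c"
    and "u \<noteq> []" "prefix u v" "u \<noteq> v"
  shows "lbl u < lbl v"
proof -
  obtain z where vz: "v = u @ z" using assms(5) prefix_def by blast
  then have zne: "z \<noteq> []" using assms(6) by auto
  have "sorted_wrt (<) (map fst v)" using s v by (metis map_mono_prefix sorted_wrt_append prefix_def)
  then have "sorted_wrt (<) (map fst u @ map fst z)" using vz by simp
  then have "fst (last u) < fst (last z)" using zne assms(4)
    by (auto simp: sorted_wrt_append)
  then show ?thesis using vz zne assms(4) by (simp add: lbl_def)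
qed

lemma closed_fork_exists: "\<exists>F. closed_fork w F"
proof -
  define hs where "hs = filter (honest_idx w) [1..<Suc (length w)]"
  define c where "c = map (\<lambda>i. (i, 0::nat)) hs"
  define F where "F = {u. prefix u c}"
  have mc: "map fst c = hs" unfolding c_def by (simp add: comp_def)
  have shs: "sorted_wrt (<) hs" unfolding hs_def by (intro sorted_wrt_filter) (rule sorted_wrt_upt)
  have sc: "sorted_wrt (<) (map fst c)" using mc shs by simp
  have hs_set: "set hs = {i. honest_idx w i}" unfolding hs_def by (auto simp: honest_idx_def)
  have hs_el: "1 \<le> i \<and> i \<le> length w" if "i \<in> set hs" for i
  proof -
    have "i \<in> {1..<Suc (length w)}" using that unfolding hs_def set_filter set_upt by blast
    then show ?thesis by simp
  qed
  have lblin: "lbl u \<in> set hs" if "prefix u c" "u \<noteq> []" for u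
  proof -
    have "last u \<in> set c" using that by (metis last_in_set prefix_def set_append UnI1)
    then show ?thesis unfolding lbl_def c_def using that by auto
  qed
  have ssub: "sorted_wrt (<) (0 # map fst u)" if "prefix u c" for u
  proof -
    have "sorted_wrt (<) (map fst u)" using sc that by (metis map_mono_prefix sorted_wrt_append prefix_def)
    moreover have "\<forall>a\<in>set u. 0 < fst a"
    proof
      fix a assume "a \<in> set u"
      then have "a \<in> set c" using set_mono_prefix[OF that] by blast
      then have "fst a \<in> set hs" unfolding c_def by force
      then show "0 < fst a" using hs_el by fastforce
    qed
    ultimately show ?thesis by simp
  qed
  have isf: "is_fork w F"
    unfolding is_fork_def
  proof (intro conjI ballI allI impI)
    have "F \<subseteq> set (prefixes c)" unfolding F_def by (simp add: subset_iff)
    then show "finite F" by (rule finite_subset) simp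
    show "[] \<in> F" unfolding F_def by simp
    show "u \<in> F" if "v \<in> F" "prefix u v" for u v using that unfolding F_def by (auto intro: prefix_order.trans)
    show "sorted_wrt (<) (0 # map fst v)" if "v \<in> F" for v using that ssub unfolding F_def by auto
    show "fst a \<le> length w" if "v \<in> F" "a \<in> set v" for v a
    proof -
      have "a \<in> set c" using set_mono_prefix[of v c] that unfolding F_def by auto
      then have "fst a \<in> set hs" unfolding c_def by force
      then show "fst a \<le> length w" using hs_el by blast
    qed
  next
    fix i assume hi: "honest_idx w i"
    then have "i \<in> set hs" using hs_set by auto
    then have "(i, 0) \<in> set c" unfolding c_def by auto
    then obtain xs ys where cs: "c = xs @ (i, 0) # ys" by (meson split_list)
    define v where "v = xs @ [(i, 0)]"
    have vF: "v \<in> F" unfolding F_def v_def cs by simp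
    have vl: "v \<noteq> [] \<and> lbl v = i" unfolding v_def by (simp add: lbl_def)
    show "\<exists>!v. v \<in> F \<and> v \<noteq> [] \<and> lbl v = i"
    proof (rule ex1I[of _ v])
      show "v \<in> F \<and> v \<noteq> [] \<and> lbl v = i" using vF vl by simp
      fix u assume u: "u \<in> F \<and> u \<noteq> [] \<and> lbl u = i"
      show "u = v"
      proof (rule ccontr)
        assume ne: "u \<noteq> v"
        have pu: "prefix u c" "prefix v c" using u vF unfolding F_def by auto
        then have "prefix u v \<or> prefix v u" using prefix_same_cases by blast
        then show False
          using sorted_prefix_lbl_less[OF sc pu(1) pu(2)] sorted_prefix_lbl_less[OF sc pu(2) pu(1)] ne u vl
          by auto
      qed
    qed
  next
    fix u v assume uv: "u \<in> F" "v \<in> F" "u \<noteq> []" "v \<noteq> []" "lbl u < lbl v"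
    have pu: "prefix u c" "prefix v c" using uv unfolding F_def by auto
    then have "prefix u v \<or> prefix v u" using prefix_same_cases by blast
    moreover have "\<not> prefix v u"
      using sorted_prefix_lbl_less[OF sc pu(2) pu(1)] uv by (cases "u = v") auto
    ultimately have "prefix u v" "u \<noteq> v" using uv by auto
    then show "length u < length v" by (simp add: prefix_length_less)
  qed
  have "closed_fork w F"
    unfolding closed_fork_def
  proof (intro conjI isf ballI impI)
    fix v assume vF: "v \<in> F" and leaf: "\<forall>a. v @ [a] \<notin> F"
    have pv: "prefix v c" using vF unfolding F_def by simp
    have "v = c"
    proof (rule ccontr)
      assume "v \<noteq> c"
      then have "strict_prefix v c" using pv by simp
      then obtain a z where "c = v @ a # z" by (metis prefix_def strict_prefix_def append_Nil2 neq_Nil_conv)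
      then have "v @ [a] \<in> F" unfolding F_def by simp
      then show False using leaf by blast
    qed
    show "v = [] \<or> honest_idx w (lbl v)"
      using lblin[OF pv] hs_set by auto
  qed
  then show ?thesis by blast
qed


lemma reserve_le: "reserve w t \<le> length w"
proof -
  have "{i. adv_idx w i \<and> i > lbl t} \<subseteq> {1..length w}" by (auto simp: adv_idx_def)
  then have "reserve w t \<le> card {1..length w}" unfolding reserve_def by (intro card_mono) auto
  then show ?thesis by simp
qed

lemma reach_bounds: assumes "is_fork w F"
  shows "- int (length w) \<le> reach w F t" "reach w F t \<le> int (length w)"
proof -
  have "gap F t \<le> length w" unfolding gap_def using height_le[OF assms] by simp
  then show "- int (length w) \<le> reach w F t" unfolding reach_def by simp
  show "reach w F t \<le> int (length w)" unfolding reach_def using reserve_le[of w t] by simp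
qed

definition TT :: "bool list \<Rightarrow> bool list \<Rightarrow> vtx set \<Rightarrow> int set" where
  "TT x y F = {min (reach (x @ y) F t1) (reach (x @ y) F t2) | t1 t2.
      t1 \<in> F \<and> t2 \<in> F \<and> disjoint_over (length x) t1 t2}"

lemma TT_fin: assumes "is_fork (x @ y) F" shows "finite (TT x y F)" "TT x y F \<noteq> {}"
proof -
  have "TT x y F \<subseteq> (\<lambda>(t1, t2). min (reach (x @ y) F t1) (reach (x @ y) F t2)) ` (F \<times> F)"
    unfolding TT_def by auto
  then show "finite (TT x y F)" using fork_finite[OF assms] finite_subset by blast
  have "disjoint_over (length x) [] []" unfolding disjoint_over_def by simp
  then show "TT x y F \<noteq> {}" unfolding TT_def using fork_root[OF assms] by blast
qed

lemma mu_fork_TT: "mu_fork x y F = Max (TT x y F)" unfolding mu_fork_def TT_def by simp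

lemma mu_fork_ge: assumes "is_fork (x @ y) F" "t1 \<in> F" "t2 \<in> F" "disjoint_over (length x) t1 t2"
  shows "min (reach (x @ y) F t1) (reach (x @ y) F t2) \<le> mu_fork x y F"
  unfolding mu_fork_TT using TT_fin[OF assms(1)] assms by (intro Max_ge) (auto simp: TT_def)

lemma mu_fork_att: assumes "is_fork (x @ y) F"
  shows "\<exists>t1 t2. t1 \<in> F \<and> t2 \<in> F \<and> disjoint_over (length x) t1 t2 \<and>
     mu_fork x y F = min (reach (x @ y) F t1) (reach (x @ y) F t2)"
proof -
  have "Max (TT x y F) \<in> TT x y F" using TT_fin[OF assms] by (intro Max_in) auto
  then show ?thesis unfolding mu_fork_TT TT_def by auto
qed

definition UU :: "bool list \<Rightarrow> bool list \<Rightarrow> int set" where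
  "UU x y = {mu_fork x y F | F. closed_fork (x @ y) F}"

lemma UU_fin: "finite (UU x y)" "UU x y \<noteq> {}"
proof -
  have "UU x y \<subseteq> {- int (length (x @ y)) .. int (length (x @ y))}"
  proof
    fix z assume "z \<in> UU x y"
    then obtain F where F: "closed_fork (x @ y) F" "z = mu_fork x y F" unfolding UU_def by auto
    then have f: "is_fork (x @ y) F" unfolding closed_fork_def by simp
    obtain t1 t2 where "mu_fork x y F = min (reach (x @ y) F t1) (reach (x @ y) F t2)"
      using mu_fork_att[OF f] by blast
    then show "z \<in> {- int (length (x @ y)) .. int (length (x @ y))}"
      using reach_bounds[OF f] F by (auto simp: min_def)
  qed
  then show "finite (UU x y)" using finite_subset by blast
  show "UU x y \<noteq> {}" using closed_fork_exists[of "x @ y"] unfolding UU_def by blast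
qed

lemma mu_UU: "mu x y = Max (UU x y)" unfolding mu_def UU_def by simp

lemma mu_nonneg_D: assumes "0 \<le> mu x y"
  shows "\<exists>F t1 t2. closed_fork (x @ y) F \<and> t1 \<in> F \<and> t2 \<in> F \<and> disjoint_over (length x) t1 t2 \<and>
      0 \<le> reach (x @ y) F t1 \<and> 0 \<le> reach (x @ y) F t2"
proof -
  have "Max (UU x y) \<in> UU x y" using UU_fin by (intro Max_in) auto
  then obtain F where F: "closed_fork (x @ y) F" "mu x y = mu_fork x y F" unfolding mu_UU UU_def by auto
  then have f: "is_fork (x @ y) F" unfolding closed_fork_def by simp
  obtain t1 t2 where "t1 \<in> F \<and> t2 \<in> F \<and> disjoint_over (length x) t1 t2 \<and>
     mu_fork x y F = min (reach (x @ y) F t1) (reach (x @ y) F t2)" using mu_fork_att[OF f] by blast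
  then show ?thesis using F assms by (intro exI[of _ F] exI[of _ t1] exI[of _ t2]) auto
qed

lemma mu_nonneg_I: assumes "closed_fork (x @ y) F" "t1 \<in> F" "t2 \<in> F" "disjoint_over (length x) t1 t2"
    "0 \<le> reach (x @ y) F t1" "0 \<le> reach (x @ y) F t2"
  shows "0 \<le> mu x y"
proof -
  have f: "is_fork (x @ y) F" using assms(1) unfolding closed_fork_def by simp
  have "0 \<le> mu_fork x y F" using mu_fork_ge[OF f assms(2-4)] assms(5,6) by linarith
  also have "mu_fork x y F \<le> mu x y" unfolding mu_UU using UU_fin assms(1)
    by (intro Max_ge) (auto simp: UU_def)
  finally show ?thesis .
qed

theorem mu_catalan: assumes "0 \<le> mu x y" "length x \<le> h" shows "\<not> catalan (x @ y) h"
proof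
  assume cat: "catalan (x @ y) h"
  let ?w = "x @ y"
  obtain F t1 t2 where F: "closed_fork ?w F" "t1 \<in> F" "t2 \<in> F" "disjoint_over (length x) t1 t2"
      "0 \<le> reach ?w F t1" "0 \<le> reach ?w F t2" using mu_nonneg_D[OF assms(1)] by blast
  have f: "is_fork ?w F" using F(1) unfolding closed_fork_def by simp
  have hh: "honest_idx ?w (Suc h)" using cat unfolding catalan_def honest_idx_def by simp
  have catc: "nA ?w a b < nH ?w a b" if "a < Suc h" "Suc h \<le> b" "b \<le> length ?w" for a b
  proof -
    have "S ?w a b < 0" using cat that unfolding catalan_def by auto
    then show ?thesis using S_count[of a b ?w] that by simp
  qed
  have v: "vh F (Suc h) \<noteq> []" "lbl (vh F (Suc h)) = Suc h" using vh[OF f hh] by auto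
  have "\<not> (prefix (vh F (Suc h)) t1 \<and> prefix (vh F (Suc h)) t2)"
    using F(4) v assms(2) unfolding disjoint_over_def by force
  then show False
    using catalan_tine[OF f F(2) F(5) hh catc] catalan_tine[OF f F(3) F(6) hh catc] by blast
qed


lemma flip_honest: assumes "w' = w[i := True]" "i < length w"
  shows "honest_idx w' j \<longleftrightarrow> honest_idx w j \<and> j \<noteq> Suc i"
  using assms by (auto simp: honest_idx_def nth_list_update)

lemma flip_adv: assumes "w' = w[i := True]" "i < length w" "adv_idx w j"
  shows "adv_idx w' j"
  using assms by (auto simp: adv_idx_def nth_list_update)

lemma flip_adv': assumes "w' = w[i := True]" "i < length w" "1 \<le> j" "j \<le> length w" "\<not> honest_idx w' j"
  shows "adv_idx w' j"
  using assms by (auto simp: adv_idx_def honest_idx_def nth_list_update)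

lemma height_mono: assumes "is_fork w F" "F' \<subseteq> F" "[] \<in> F'" shows "height F' \<le> height F"
  unfolding height_def using assms fork_finite[OF assms(1)] by (intro Max_mono) auto

lemma lbl_prefix_le: assumes "is_fork w F" "t \<in> F" "prefix u t" shows "lbl u \<le> lbl t"
proof (cases "u = []")
  case True then show ?thesis by (simp add: lbl_def)
next
  case False
  obtain z where tz: "t = u @ z" using assms(3) prefix_def by blast
  show ?thesis
  proof (cases "z = []")
    case True then show ?thesis using tz by simp
  next
    case zne: False
    have "sorted_wrt (<) (map fst t)" using fork_sorted[OF assms(1,2)] by simp
    then have "fst (last u) < fst (last z)" using tz False zne by (auto simp: sorted_wrt_append)
    then show ?thesis using tz False zne by (simp add: lbl_def)
  qed
qed

lemma fork_F3: "is_fork w F \<Longrightarrow> honest_idx w i \<Longrightarrow> \<exists>!v. v \<in> F \<and> v \<noteq> [] \<and> lbl v = i"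
  unfolding is_fork_def by blast

lemma fork_F4: "is_fork w F \<Longrightarrow> u \<in> F \<Longrightarrow> v \<in> F \<Longrightarrow> u \<noteq> [] \<Longrightarrow> v \<noteq> [] \<Longrightarrow>
   honest_idx w (lbl u) \<Longrightarrow> honest_idx w (lbl v) \<Longrightarrow> lbl u < lbl v \<Longrightarrow> length u < length v"
  unfolding is_fork_def by blast

lemma mono_flip:
  assumes w': "w' = w[i := True]" and i: "i < length w"
    and mu0: "0 \<le> mu (take m w) (drop m w)"
  shows "0 \<le> mu (take m w') (drop m w')"
proof -
  have lw: "length w' = length w" using w' by simp
  obtain F t1 t2 where F: "closed_fork w F" "t1 \<in> F" "t2 \<in> F" "disjoint_over (length (take m w)) t1 t2"
      "0 \<le> reach w F t1" "0 \<le> reach w F t2" using mu_nonneg_D[OF mu0] by auto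
  have f: "is_fork w F" using F(1) unfolding closed_fork_def by simp
  define F' where "F' = {v \<in> F. \<exists>u\<in>F. prefix v u \<and> (u = [] \<or> honest_idx w' (lbl u))}"
  have F'F: "F' \<subseteq> F" unfolding F'_def by auto
  have rootF': "[] \<in> F'" unfolding F'_def using fork_root[OF f] by auto
  have selfF': "v \<in> F'" if "v \<in> F" "honest_idx w' (lbl v)" for v
    using that unfolding F'_def by auto
  have f': "is_fork w' F'"
    unfolding is_fork_def
  proof (intro conjI ballI allI impI)
    show "finite F'" using F'F fork_finite[OF f] finite_subset by blast
    show "[] \<in> F'" by (rule rootF')
    show "u \<in> F'" if vF': "v \<in> F'" and pu: "prefix u v" for u v
    proof -
      obtain z where z: "v \<in> F" "z \<in> F" "prefix v z" "z = [] \<or> honest_idx w' (lbl z)" using vF' unfolding F'_def by blast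
      have "u \<in> F" using fork_prefix[OF f z(1) pu] .
      moreover have "prefix u z" using pu z(3) by (rule prefix_order.trans)
      ultimately show ?thesis using z unfolding F'_def by blast
    qed
    show "sorted_wrt (<) (0 # map fst v)" if "v \<in> F'" for v
    proof -
      have "v \<in> F" using that F'F by blast
      then show ?thesis by (rule fork_sorted[OF f])
    qed
    show "fst a \<le> length w'" if "v \<in> F'" "a \<in> set v" for v a
    proof -
      have "v \<in> F" using that F'F by blast
      then show ?thesis using fork_lbl_bound[OF f _ that(2)] lw by simp
    qed
  next
    fix j assume hj: "honest_idx w' j"
    then have hj0: "honest_idx w j" using flip_honest[OF w' i] by simp
    then have ex: "\<exists>!v. v \<in> F \<and> v \<noteq> [] \<and> lbl v = j" by (rule fork_F3[OF f])
    then obtain v where v: "v \<in> F" "v \<noteq> []" "lbl v = j" by blast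
    then have vF': "v \<in> F'" using selfF' hj by simp
    show "\<exists>!v. v \<in> F' \<and> v \<noteq> [] \<and> lbl v = j"
    proof (rule ex1I[of _ v])
      show "v \<in> F' \<and> v \<noteq> [] \<and> lbl v = j" using vF' v by simp
      fix u assume "u \<in> F' \<and> u \<noteq> [] \<and> lbl u = j"
      then have "u \<in> F \<and> u \<noteq> [] \<and> lbl u = j" using F'F by blast
      then show "u = v" using ex v by blast
    qed
  next
    fix u v assume uv: "u \<in> F'" "v \<in> F'" "u \<noteq> []" "v \<noteq> []" "honest_idx w' (lbl u)"
      "honest_idx w' (lbl v)" "lbl u < lbl v"
    have "u \<in> F" "v \<in> F" using uv F'F by auto
    then show "length u < length v" using fork_F4[OF f] uv flip_honest[OF w' i] by blast
  qed
  have cf': "closed_fork w' F'"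
    unfolding closed_fork_def
  proof (intro conjI f' ballI impI)
    fix v assume vF: "v \<in> F'" and leaf: "\<forall>a. v @ [a] \<notin> F'"
    obtain u where u: "u \<in> F" "prefix v u" "u = [] \<or> honest_idx w' (lbl u)" using vF unfolding F'_def by blast
    show "v = [] \<or> honest_idx w' (lbl v)"
    proof (cases "u = v")
      case True then show ?thesis using u by auto
    next
      case False
      then obtain a z where uz: "u = v @ a # z" using u(2)
        by (metis prefix_def append_Nil2 neq_Nil_conv)
      have "prefix (v @ [a]) u" using uz by simp
      then have "v @ [a] \<in> F'" using u fork_prefix[OF f u(1)] unfolding F'_def by blast
      then show ?thesis using leaf by blast
    qed
  qed
  have hF: "height F' \<le> height F" by (rule height_mono[OF f F'F rootF'])
  have cut: "\<exists>t'. t' \<in> F' \<and> prefix t' t \<and> reach w F t \<le> reach w' F' t'" if tF: "t \<in> F" for t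
  proof -
    define L where "L = length t"
    define lab where "lab p = fst (t ! (p - 1))" for p
    define J where "J = {j. j \<le> L \<and> take j t \<in> F'}"
    have finJ: "finite J" unfolding J_def by auto
    have J0: "0 \<in> J" unfolding J_def using rootF' by simp
    define jt where "jt = Max J"
    have jtJ: "jt \<in> J" unfolding jt_def using finJ J0 by (intro Max_in) auto
    define t' where "t' = take jt t"
    have t'F': "t' \<in> F'" and jtL: "jt \<le> L" using jtJ unfolding t'_def J_def by auto
    have pt': "prefix t' t" unfolding t'_def by (simp add: take_is_prefix)
    have lent': "length t' = jt" using jtL unfolding t'_def L_def by simp
    have labb: "0 < lab p \<and> lab p \<le> length w" if "1 \<le> p" "p \<le> L" for p
      using lab_bound[OF f tF, of "p - 1"] that unfolding lab_def L_def by auto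
    have labm: "lab p < lab p'" if "1 \<le> p" "p < p'" "p' \<le> L" for p p'
      using lab_mono[OF f tF, of "p - 1" "p' - 1"] that unfolding lab_def L_def by auto
    have ltt: "lbl t = (if L = 0 then 0 else lab L)"
      unfolding lab_def L_def by (auto simp: lbl_def last_conv_nth)
    have ltt': "lbl t' = (if jt = 0 then 0 else lab jt)"
      using lbl_take[of jt t] jtL unfolding t'_def lab_def L_def by (auto simp: lbl_def)
    have adv: "lab p \<in> {j. adv_idx w' j \<and> lbl t' < j \<and> j \<le> lbl t}" if "p \<in> {Suc jt..L}" for p
    proof -
      have pr: "jt < p" "1 \<le> p" "p \<le> L" using that by auto
      have "p \<notin> J" using pr finJ unfolding jt_def using Max_ge not_le by blast
      then have "take p t \<notin> F'" using pr unfolding J_def by auto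
      moreover have "take p t \<in> F" using fork_prefix[OF f tF] by (simp add: take_is_prefix)
      ultimately have "\<not> honest_idx w' (lbl (take p t))" using selfF' by blast
      then have "\<not> honest_idx w' (lab p)" using lbl_take[of p t] pr unfolding lab_def L_def by simp
      then have "adv_idx w' (lab p)" using labb[of p] pr lw flip_adv'[OF w' i] by auto
      moreover have "lbl t' < lab p"
        using ltt' labb[of p] labm[of jt p] pr by (cases "jt = 0") auto
      moreover have "lab p \<le> lbl t" using ltt labm[of p L] pr by (cases "p = L") auto
      ultimately show ?thesis by simp
    qed
    have inj: "inj_on lab {Suc jt..L}"
    proof (rule inj_onI)
      fix a b assume ab: "a \<in> {Suc jt..L}" "b \<in> {Suc jt..L}" "lab a = lab b"
      show "a = b"
      proof (rule ccontr)
        assume "a \<noteq> b"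
        then consider "a < b" | "b < a" by linarith
        then show False using labm[of a b] labm[of b a] ab by (cases; auto)
      qed
    qed
    define B where "B = lab ` {Suc jt..L}"
    define R where "R = {j. adv_idx w j \<and> lbl t < j}"
    have finR: "finite R" unfolding R_def by (rule finite_subset[of _ "{..length w}"]) (auto simp: adv_idx_def)
    have finB: "finite B" unfolding B_def by simp
    have cardB: "card B = L - jt" unfolding B_def using card_image[OF inj] by simp
    have disj: "B \<inter> R = {}" using adv unfolding B_def R_def by fastforce
    have sub: "B \<union> R \<subseteq> {j. adv_idx w' j \<and> lbl t' < j}"
    proof -
      have "lbl t' \<le> lbl t" by (rule lbl_prefix_le[OF f tF pt'])
      then show ?thesis using adv flip_adv[OF w' i] unfolding B_def R_def by auto
    qed
    have finT: "finite {j. adv_idx w' j \<and> lbl t' < j}"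
      by (rule finite_subset[of _ "{..length w'}"]) (auto simp: adv_idx_def)
    have "card B + card R \<le> reserve w' t'"
      unfolding reserve_def using card_Un_disjoint[OF finB finR disj] card_mono[OF finT sub] by simp
    then have r1: "L - jt + reserve w t \<le> reserve w' t'" using cardB unfolding R_def reserve_def by simp
    have Lh: "L \<le> height F" using height_ge[OF f tF] unfolding L_def .
    have jh: "jt \<le> height F'" using height_ge[OF f' t'F'] lent' by simp
    have "reach w F t \<le> reach w' F' t'"
      unfolding reach_def gap_def using r1 Lh jh hF lent' jtL unfolding L_def by linarith
    then show ?thesis using t'F' pt' by blast
  qed
  obtain t1' where t1': "t1' \<in> F'" "prefix t1' t1" "reach w F t1 \<le> reach w' F' t1'" using cut[OF F(2)] by blast
  obtain t2' where t2': "t2' \<in> F'" "prefix t2' t2" "reach w F t2 \<le> reach w' F' t2'" using cut[OF F(3)] by blast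
  have len: "length (take m w') = length (take m w)" using lw by simp
  have disj: "disjoint_over (length (take m w')) t1' t2'"
    using F(4) t1'(2) t2'(2) unfolding disjoint_over_def len by (blast intro: prefix_order.trans)
  show ?thesis
    by (rule mu_nonneg_I[of _ _ F' t1' t2']) (use cf' t1' t2' disj F in auto)
qed


lemma prob_bern_Suc:
  assumes "0 \<le> q" "q \<le> 1"
  shows "measure_pmf.prob (bern_list (Suc n) q) X =
    q * measure_pmf.prob (bern_list n q) {s. True # s \<in> X} +
    (1 - q) * measure_pmf.prob (bern_list n q) {s. False # s \<in> X}"
proof -
  have "measure_pmf.prob (bern_list (Suc n) q) X = measure_pmf.expectation (bern_list (Suc n) q) (indicator X)"
    by simp
  also have "\<dots> = q * measure_pmf.expectation (bern_list n q) (\<lambda>s. indicator X (True # s)) +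
    (1 - q) * measure_pmf.expectation (bern_list n q) (\<lambda>s. indicator X (False # s))"
    by (rule E_bern_Suc[OF assms])
  also have "(\<lambda>s. indicator X (True # s) :: real) = indicator {s. True # s \<in> X}"
    by (auto simp: indicator_def)
  also have "(\<lambda>s. indicator X (False # s) :: real) = indicator {s. False # s \<in> X}"
    by (auto simp: indicator_def)
  finally show ?thesis by simp
qed

lemma prob_mono_supp:
  assumes "\<And>x. x \<in> set_pmf M \<Longrightarrow> x \<in> A \<Longrightarrow> x \<in> B"
  shows "measure_pmf.prob M A \<le> measure_pmf.prob M B"
proof -
  have "measure_pmf.prob M A = measure_pmf.prob M (A \<inter> set_pmf M)" by (simp add: measure_Int_set_pmf)
  also have "\<dots> \<le> measure_pmf.prob M B" using assms by (intro measure_pmf.finite_measure_mono) auto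
  finally show ?thesis .
qed

lemma prob_eq_supp:
  assumes "\<And>x. x \<in> set_pmf M \<Longrightarrow> x \<in> A \<longleftrightarrow> x \<in> B"
  shows "measure_pmf.prob M A = measure_pmf.prob M B"
  using prob_mono_supp[of M A B] prob_mono_supp[of M B A] assms by fastforce

lemma lists_Suc: "{p :: bool list. length p = Suc t} = (\<lambda>(p, b). p @ [b]) ` ({p. length p = t} \<times> UNIV)"
proof (rule set_eqI, rule iffI)
  fix x :: "bool list" assume "x \<in> {p. length p = Suc t}"
  then have "x = butlast x @ [last x]" "length (butlast x) = t"
    by (auto intro!: append_butlast_last_id[symmetric])
  then show "x \<in> (\<lambda>(p, b). p @ [b]) ` ({p. length p = t} \<times> UNIV)" by (metis (mono_tags) SigmaI UNIV_I case_prod_conv image_eqI mem_Collect_eq)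
qed auto

theorem dominance:
  fixes P :: "bool list pmf" and A :: "bool list set"
  assumes supp: "set_pmf P \<subseteq> {w. length w = n}"
    and mart: "\<And>t p. t < n \<Longrightarrow> length p = t \<Longrightarrow>
        measure_pmf.prob P {w. take t w = p \<and> w ! t} \<le> q * measure_pmf.prob P {w. take t w = p}"
    and q: "0 \<le> q" "q \<le> 1"
    and up: "\<And>u s. length u + Suc (length s) = n \<Longrightarrow> u @ False # s \<in> A \<Longrightarrow> u @ True # s \<in> A"
  shows "measure_pmf.prob P A \<le> measure_pmf.prob (bern_list n q) A"
proof -
  define Dp where "Dp p = measure_pmf.prob P {w. take (length p) w = p}" for p
  define hv where "hv p = measure_pmf.prob (bern_list (n - length p) q) {s. p @ s \<in> A}" for p
  define Phi where "Phi t = (\<Sum>p\<in>{p. length p = t}. Dp p * hv p)" for t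
  have fin: "finite {p :: bool list. length p = t}" for t by (rule finite_len)
  have Phi0: "Phi 0 = measure_pmf.prob (bern_list n q) A"
  proof -
    have "{p :: bool list. length p = 0} = {[]}" by auto
    then show ?thesis unfolding Phi_def Dp_def hv_def by simp
  qed
  have Phin: "Phi n = measure_pmf.prob P A"
  proof -
    have Dn: "Dp p = pmf P p" if "length p = n" for p
    proof -
      have "Dp p = measure_pmf.prob P {p}"
        unfolding Dp_def using supp that by (intro prob_eq_supp) auto
      then show ?thesis by (simp add: measure_pmf_single)
    qed
    have hn: "hv p = indicator A p" if "length p = n" for p
      unfolding hv_def using that by (simp add: indicator_def)
    have "Phi n = (\<Sum>p\<in>{p. length p = n}. pmf P p * indicator A p)"
      unfolding Phi_def using Dn hn by simp
    also have "\<dots> = (\<Sum>p\<in>{p. length p = n} \<inter> A. pmf P p)"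
      by (simp add: sum.inter_restrict[OF fin]) (intro sum.cong, auto simp: indicator_def)
    also have "\<dots> = measure_pmf.prob P ({p. length p = n} \<inter> A)"
      by (rule measure_measure_pmf_finite[symmetric]) (simp add: fin)
    also have "\<dots> = measure_pmf.prob P A" using supp by (intro prob_eq_supp) auto
    finally show ?thesis .
  qed
  have step: "Phi (Suc t) \<le> Phi t" if tn: "t < n" for t
  proof -
    have inj: "inj_on (\<lambda>(p, b). p @ [b]) ({p :: bool list. length p = t} \<times> UNIV)"
      by (rule inj_onI) auto
    have "Phi (Suc t) = (\<Sum>x\<in>{p. length p = t} \<times> UNIV. Dp (fst x @ [snd x]) * hv (fst x @ [snd x]))"
      unfolding Phi_def lists_Suc by (subst sum.reindex[OF inj]) (simp add: case_prod_unfold)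
    also have "\<dots> = (\<Sum>p\<in>{p. length p = t}. Dp (p @ [True]) * hv (p @ [True]) + Dp (p @ [False]) * hv (p @ [False]))"
      by (subst sum.cartesian_product') (simp add: UNIV_bool add.commute)
    also have "\<dots> \<le> (\<Sum>p\<in>{p. length p = t}. Dp p * hv p)"
    proof (intro sum_mono)
      fix p :: "bool list" assume "p \<in> {p. length p = t}"
      then have lp: "length p = t" by simp
      have tk: "take (Suc t) w = take t w @ [w ! t]" if "w \<in> set_pmf P" for w
        using that supp tn by (auto simp: take_Suc_conv_app_nth)
      have DT: "Dp (p @ [True]) = measure_pmf.prob P {w. take t w = p \<and> w ! t}"
        unfolding Dp_def using lp tk by (intro prob_eq_supp) auto
      have DF: "Dp (p @ [False]) = measure_pmf.prob P {w. take t w = p \<and> \<not> w ! t}"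
        unfolding Dp_def using lp tk by (intro prob_eq_supp) auto
      have Dsum: "Dp p = Dp (p @ [True]) + Dp (p @ [False])"
      proof -
        have "Dp p = measure_pmf.prob P ({w. take t w = p \<and> w ! t} \<union> {w. take t w = p \<and> \<not> w ! t})"
          unfolding Dp_def using lp by (intro arg_cong[where f="measure_pmf.prob P"]) auto
        also have "\<dots> = measure_pmf.prob P {w. take t w = p \<and> w ! t} + measure_pmf.prob P {w. take t w = p \<and> \<not> w ! t}"
          by (rule measure_pmf.finite_measure_Union) auto
        finally show ?thesis using DT DF by simp
      qed
      have DTq: "Dp (p @ [True]) \<le> q * Dp p" using mart[OF tn lp] DT unfolding Dp_def lp by simp
      have nl: "n - length p = Suc (n - length (p @ [True]))" using lp tn by simp
      have hvrec: "hv p = q * hv (p @ [True]) + (1 - q) * hv (p @ [False])"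
        unfolding hv_def nl prob_bern_Suc[OF q] by simp
      have hvmono: "hv (p @ [False]) \<le> hv (p @ [True])"
      proof -
        have "measure_pmf.prob (bern_list (n - Suc t) q) {s. p @ False # s \<in> A}
            \<le> measure_pmf.prob (bern_list (n - Suc t) q) {s. p @ True # s \<in> A}"
        proof (rule prob_mono_supp)
          fix s assume s: "s \<in> set_pmf (bern_list (n - Suc t) q)" "s \<in> {s. p @ False # s \<in> A}"
          have "length s = n - Suc t" using s(1) set_bern by fastforce
          then have "length p + Suc (length s) = n" using lp tn by simp
          then show "s \<in> {s. p @ True # s \<in> A}" using up s(2) by simp
        qed
        then show ?thesis unfolding hv_def using lp by simp
      qed
      have hF0: "0 \<le> hv (p @ [False])" unfolding hv_def by simp
      have D0: "0 \<le> Dp (p @ [True])" unfolding Dp_def by simp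
      have "0 \<le> (q * Dp p - Dp (p @ [True])) * (hv (p @ [True]) - hv (p @ [False]))"
        using DTq hvmono by (intro mult_nonneg_nonneg) auto
      then show "Dp (p @ [True]) * hv (p @ [True]) + Dp (p @ [False]) * hv (p @ [False]) \<le> Dp p * hv p"
        unfolding hvrec using Dsum by (simp add: algebra_simps)
    qed
    finally show ?thesis unfolding Phi_def .
  qed
  have "Phi t \<le> Phi 0" if "t \<le> n" for t
    using that
  proof (induction t)
    case 0 then show ?case by simp
  next
    case (Suc t) then show ?case using step[of t] by simp
  qed
  from this[of n] show ?thesis using Phi0 Phin by simp
qed


lemma bern_append: "map_pmf (\<lambda>(x, y). x @ y) (pair_pmf (bern_list m q) B) = bind_pmf (bern_list m q) (\<lambda>x. map_pmf (\<lambda>y. x @ y) B)"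
  by (simp add: pair_pmf_def map_bind_pmf map_pmf_def bind_assoc_pmf bind_return_pmf)

lemma bern_add: "map_pmf (\<lambda>(x, y). x @ y) (pair_pmf (bern_list m q) (bern_list k q)) = bern_list (m + k) q"
proof (induction m)
  case 0
  have e: "((@) [] :: bool list \<Rightarrow> bool list) = (\<lambda>x. x)" by auto
  show ?case by (subst bern_append) (simp add: bind_return_pmf e map_pmf_ident)
next
  case (Suc m)
  have "map_pmf (\<lambda>(x, y). x @ y) (pair_pmf (bern_list (Suc m) q) (bern_list k q))
     = bind_pmf (bernoulli_pmf q) (\<lambda>b. map_pmf (Cons b) (map_pmf (\<lambda>(x, y). x @ y) (pair_pmf (bern_list m q) (bern_list k q))))"
    by (simp add: bern_append pair_pmf_def map_bind_pmf map_pmf_def bind_assoc_pmf bind_return_pmf)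
  also have "\<dots> = bind_pmf (bernoulli_pmf q) (\<lambda>b. map_pmf (Cons b) (bern_list (m + k) q))"
    using Suc by simp
  also have "\<dots> = bern_list (Suc m + k) q"
    by (simp add: pair_pmf_def map_bind_pmf map_pmf_def bind_assoc_pmf bind_return_pmf)
  finally show ?case .
qed


lemma part2_small:
  fixes eps :: real
  assumes e: "0 < eps" "eps \<le> 1/8"
  shows "measure_pmf.prob (pair_pmf (bern_list m ((1 - eps) / 2)) (bern_list k ((1 - eps) / 2)))
            {(x, y). 0 \<le> mu x y} \<le> (1 - eps^3/2) ^ k"
proof -
  let ?q = "(1 - eps) / 2"
  let ?M = "pair_pmf (bern_list m ?q) (bern_list k ?q)"
  have sub: "{(x, y). 0 \<le> mu x y} \<subseteq> {(x, y). Gx x (snd (sty y)) = 0}"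
  proof safe
    fix x y assume mu: "0 \<le> mu x y"
    show "Gx x (snd (sty y)) = 0"
    proof (rule ccontr)
      assume "Gx x (snd (sty y)) \<noteq> 0"
      then obtain h where "length x \<le> h" "catalan (x @ y) h" using Gx_catalan[of x y] by auto
      then show False using mu_catalan[OF mu] by blast
    qed
  qed
  have "measure_pmf.prob ?M {(x, y). 0 \<le> mu x y} \<le> measure_pmf.prob ?M {(x, y). Gx x (snd (sty y)) = 0}"
    using sub by (intro measure_pmf.finite_measure_mono) auto
  also have "\<dots> \<le> (1 - eps^3/2) ^ k"
    by (rule G_bound[where e = eps and c = "1 + 3*eps^2/4" and b = "(1-eps)*(1 + 3*eps^2/4)", OF e]) auto
  finally show ?thesis .
qed

lemma pow_exp: fixes z :: real assumes "0 \<le> z" "z \<le> 1" shows "(1 - z) ^ k \<le> exp (- (z * real k))"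
proof -
  have "(1 - z) ^ k \<le> exp (- z) ^ k"
    using assms by (intro power_mono) (auto simp: exp_ge_add_one_self[of "-z", simplified])
  also have "\<dots> = exp (- (z * real k))" by (simp add: exp_of_nat_mult[symmetric] mult.commute)
  finally show ?thesis .
qed

theorem mainTheorem15:
  "\<exists>C::real. \<forall>(eps::real) (m::nat) (k::nat) (D :: (bool list \<times> bool list) pmf).
     0 < eps \<and> eps < 1 \<and>
     set_pmf D \<subseteq> {(x, y). length x = m \<and> length y = k} \<and>
     eps_martingale eps (m + k) (map_pmf (\<lambda>(x, y). x @ y) D)
     \<longrightarrow>
     measure_pmf.prob D {(x, y). 0 \<le> mu x y}
       \<le> measure_pmf.prob (pair_pmf (bern_list m ((1 - eps) / 2)) (bern_list k ((1 - eps) / 2)))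
            {(x, y). 0 \<le> mu x y}
     \<and> measure_pmf.prob (pair_pmf (bern_list m ((1 - eps) / 2)) (bern_list k ((1 - eps) / 2)))
            {(x, y). 0 \<le> mu x y}
       \<le> exp (- (eps ^ 3 * (1 - C * eps) * real k / 2))"
proof (intro exI[of _ 8] allI impI conjI)
  fix eps :: real and m k :: nat and D :: "(bool list \<times> bool list) pmf"
  assume H: "0 < eps \<and> eps < 1 \<and>
     set_pmf D \<subseteq> {(x, y). length x = m \<and> length y = k} \<and>
     eps_martingale eps (m + k) (map_pmf (\<lambda>(x, y). x @ y) D)"
  let ?q = "(1 - eps) / 2"
  let ?M = "pair_pmf (bern_list m ?q) (bern_list k ?q)"
  let ?P = "map_pmf (\<lambda>(x, y). x @ y) D"
  define A where "A = {w. 0 \<le> mu (take m w) (drop m w)}"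
  have q: "0 \<le> ?q" "?q \<le> 1" using H by auto
  have eqD: "measure_pmf.prob D {(x, y). 0 \<le> mu x y} = measure_pmf.prob ?P A"
  proof -
    have "measure_pmf.prob ?P A = measure_pmf.prob D ((\<lambda>(x, y). x @ y) -` A)" by simp
    also have "\<dots> = measure_pmf.prob D {(x, y). 0 \<le> mu x y}"
      using H by (intro prob_eq_supp) (auto simp: A_def)
    finally show ?thesis by simp
  qed
  have eqM: "measure_pmf.prob ?M {(x, y). 0 \<le> mu x y} = measure_pmf.prob (bern_list (m + k) ?q) A"
  proof -
    have "measure_pmf.prob (bern_list (m + k) ?q) A = measure_pmf.prob (map_pmf (\<lambda>(x, y). x @ y) ?M) A"
      by (simp only: bern_add)
    also have "\<dots> = measure_pmf.prob ?M ((\<lambda>(x, y). x @ y) -` A)" by simp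
    also have "\<dots> = measure_pmf.prob ?M {(x, y). 0 \<le> mu x y}"
      using set_bern[of m ?q] by (intro prob_eq_supp) (auto simp: A_def)
    finally show ?thesis by simp
  qed
  have dom: "measure_pmf.prob ?P A \<le> measure_pmf.prob (bern_list (m + k) ?q) A"
  proof (rule dominance[OF _ _ q])
    show "set_pmf ?P \<subseteq> {w. length w = m + k}" using H by auto
    show "measure_pmf.prob ?P {w. take t w = p \<and> w ! t} \<le> ?q * measure_pmf.prob ?P {w. take t w = p}"
      if "t < m + k" "length p = t" for t p
      using H that unfolding eps_martingale_def by blast
    show "u @ True # s \<in> A" if "length u + Suc (length s) = m + k" "u @ False # s \<in> A" for u s
    proof -
      have "(u @ False # s)[length u := True] = u @ True # s" by simp
      then show ?thesis using mono_flip[of "u @ True # s" "u @ False # s" "length u" m] that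
        unfolding A_def by simp
    qed
  qed
  show "measure_pmf.prob D {(x, y). 0 \<le> mu x y} \<le> measure_pmf.prob ?M {(x, y). 0 \<le> mu x y}"
    using eqD eqM dom by simp
  show "measure_pmf.prob ?M {(x, y). 0 \<le> mu x y} \<le> exp (- (eps ^ 3 * (1 - 8 * eps) * real k / 2))"
  proof (cases "eps \<le> 1/8")
    case True
    have "eps^3 \<le> 1" using H by (intro power_le_one) auto
    then have e3: "0 \<le> eps^3/2" "eps^3/2 \<le> 1" using H by auto
    have "measure_pmf.prob ?M {(x, y). 0 \<le> mu x y} \<le> (1 - eps^3/2) ^ k"
      using part2_small[of eps m k] H True by simp
    also have "\<dots> \<le> exp (- (eps^3/2 * real k))" by (rule pow_exp[OF e3])
    also have "\<dots> \<le> exp (- (eps ^ 3 * (1 - 8 * eps) * real k / 2))"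
    proof -
      have "eps ^ 3 * (1 - 8 * eps) * real k \<le> eps ^ 3 * real k"
        using H by (intro mult_right_mono) (auto simp: mult_le_cancel_left1)
      then show ?thesis by simp
    qed
    finally show ?thesis .
  next
    case False
    have "eps ^ 3 * (1 - 8 * eps) * real k \<le> 0"
      using False H by (intro mult_nonpos_nonneg mult_nonneg_nonpos) auto
    then have "1 \<le> exp (- (eps ^ 3 * (1 - 8 * eps) * real k / 2))" by simp
    moreover have "measure_pmf.prob ?M {(x, y). 0 \<le> mu x y} \<le> 1" by simp
    ultimately show ?thesis by linarith
  qed
qed


end
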